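(* Let $\Gamma$ be a $(d+1)$-vertex-connected graph with at least $d+1$ vertices, and let $(q,\Gamma)$ be a framework in $\mathbb{R}^d$ with the convex containment property. Then there is a non-symmetric equilibrium stress matrix $\Omega$ of $(q,\Gamma)$ such that for every non-exceptional vertex $i$ and every neighbor $j$ of $i$, $\Omega_{ij}>0$.
   Context: A framework $(q,\Gamma)$ in $\mathbb{R}^d$ has the convex containment property if (1) for each vertex, the positions of its neighbors have affine span of dimension $d$, and (2) there is a set of $d+1$ exceptional vertices such that every other (non-exceptional) vertex $i$ has $q(i)$ in the interior of the convex hull of the positions of its neighbors. A non-symmetric equilibrium stress matrix of $(q,\Gamma)$ is a real matrix $\Omega$ indexed by $V\times V$ with $\Omega(u,w)=0$ whenever $u\ne w$ and $\{u,w\}$ is not an edge, $\sum_w\Omega(u,w)=0$ for all $u$, and $\sum_w\Omega(u,w)q(w)=0$ for all $u$. *)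

theory Defs
  imports "HOL-Analysis.Analysis"
begin

definition simple_graph :: "'v set \<Rightarrow> ('v \<Rightarrow> 'v \<Rightarrow> bool) \<Rightarrow> bool" where
  "simple_graph V E \<longleftrightarrow> finite V \<and> (\<forall>u w. E u w \<longrightarrow> u \<in> V \<and> w \<in> V)
     \<and> (\<forall>u w. E u w \<longrightarrow> E w u) \<and> (\<forall>u. \<not> E u u)"

definition neighbors :: "'v set \<Rightarrow> ('v \<Rightarrow> 'v \<Rightarrow> bool) \<Rightarrow> 'v \<Rightarrow> 'v set" where
  "neighbors V E i = {j \<in> V. E i j}"

definition connected_on :: "('v \<Rightarrow> 'v \<Rightarrow> bool) \<Rightarrow> 'v set \<Rightarrow> bool" where
  "connected_on E W \<longleftrightarrow>
     (\<forall>u\<in>W. \<forall>w\<in>W. (\<lambda>x y. E x y \<and> x \<in> W \<and> y \<in> W)\<^sup>*\<^sup>* u w)"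

text \<open>k-vertex-connected: removing any set of fewer than k vertices leaves
  a connected graph (the vertex-count condition is stated separately).\<close>
definition vertex_connected :: "nat \<Rightarrow> 'v set \<Rightarrow> ('v \<Rightarrow> 'v \<Rightarrow> bool) \<Rightarrow> bool" where
  "vertex_connected k V E \<longleftrightarrow>
     (\<forall>S. S \<subseteq> V \<and> card S < k \<longrightarrow> connected_on E (V - S))"

definition convex_containment ::
  "'v set \<Rightarrow> ('v \<Rightarrow> 'v \<Rightarrow> bool) \<Rightarrow> ('v \<Rightarrow> 'a::euclidean_space) \<Rightarrow> 'v set \<Rightarrow> bool" where
  "convex_containment V E q X \<longleftrightarrow>
     (\<forall>i\<in>V. aff_dim (q ` neighbors V E i) = int DIM('a))
     \<and> X \<subseteq> V \<and> card X = DIM('a) + 1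
     \<and> (\<forall>i\<in>V - X. q i \<in> interior (convex hull (q ` neighbors V E i)))"

definition nonsym_equilibrium_stress ::
  "'v set \<Rightarrow> ('v \<Rightarrow> 'v \<Rightarrow> bool) \<Rightarrow> ('v \<Rightarrow> 'a::euclidean_space) \<Rightarrow> ('v \<Rightarrow> 'v \<Rightarrow> real) \<Rightarrow> bool" where
  "nonsym_equilibrium_stress V E q \<Omega> \<longleftrightarrow>
     (\<forall>u\<in>V. \<forall>w\<in>V. u \<noteq> w \<and> \<not> E u w \<longrightarrow> \<Omega> u w = 0)
     \<and> (\<forall>u\<in>V. (\<Sum>w\<in>V. \<Omega> u w) = 0)
     \<and> (\<forall>u\<in>V. (\<Sum>w\<in>V. \<Omega> u w *\<^sub>R q w) = 0)"

end

theory Submission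
  imports Defs
begin

lemma interior_hull_pos_weights:
  fixes P :: "'a::euclidean_space set"
  assumes fin: "finite P" and x: "x \<in> interior (convex hull P)"
  shows "\<exists>u. (\<forall>p\<in>P. 0 < u p) \<and> sum u P = 1 \<and> (\<Sum>p\<in>P. u p *\<^sub>R p) = x"
proof -
  have ne: "P \<noteq> {}" using x by auto
  then have cP: "card P > 0" using fin by (simp add: card_gt_0_iff)
  define c where "c = (\<Sum>p\<in>P. (1 / real (card P)) *\<^sub>R p)"
  have sc: "(\<Sum>p\<in>P. 1 / real (card P)) = 1" using cP by simp
  obtain e where e: "e > 0" "ball x e \<subseteq> convex hull P"
    using x by (meson mem_interior)
  define \<epsilon> where "\<epsilon> = e / (2 * (norm (x - c) + 1))"
  have eps: "\<epsilon> > 0" unfolding \<epsilon>_def using e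
    by (intro divide_pos_pos) (auto intro: add_nonneg_pos)
  have "\<epsilon> * norm (x - c) < e"
  proof -
    have "\<epsilon> * norm (x - c) \<le> \<epsilon> * (norm (x - c) + 1)" using eps by simp
    also have "\<dots> = e / 2"
    proof -
      have hp: "norm (x - c) + 1 \<noteq> 0" by (metis add_nonneg_pos norm_ge_zero zero_less_one order_less_irrefl)
      have g: "\<And>a::real. a \<noteq> 0 \<Longrightarrow> e / (2 * a) * a = e / 2" by simp
      show ?thesis unfolding \<epsilon>_def using g[OF hp] .
    qed
    finally show ?thesis using e by simp
  qed
  define y where "y = x + \<epsilon> *\<^sub>R (x - c)"
  have "dist x y < e" unfolding y_def dist_norm using eps \<open>\<epsilon> * norm (x - c) < e\<close> by simp
  then have "y \<in> convex hull P" using e by auto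
  then obtain \<mu> where mu: "\<forall>p\<in>P. 0 \<le> \<mu> p" "sum \<mu> P = 1" "(\<Sum>p\<in>P. \<mu> p *\<^sub>R p) = y"
    using convex_hull_finite[OF fin] by auto
  define u where "u p = (\<mu> p + \<epsilon> / real (card P)) / (1 + \<epsilon>)" for p
  have "\<forall>p\<in>P. 0 < u p" unfolding u_def using mu(1) eps cP
    by (simp add: add_nonneg_pos)
  moreover have "sum u P = 1"
  proof -
    have "sum u P = (sum \<mu> P + (\<Sum>p\<in>P. \<epsilon> / real (card P))) / (1 + \<epsilon>)"
      unfolding u_def sum_divide_distrib[symmetric] sum.distrib ..
    also have "\<dots> = 1" using mu(2) cP eps by simp
    finally show ?thesis .
  qed
  moreover have "(\<Sum>p\<in>P. u p *\<^sub>R p) = x"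
  proof -
    have "(\<Sum>p\<in>P. u p *\<^sub>R p) = (1 / (1 + \<epsilon>)) *\<^sub>R ((\<Sum>p\<in>P. \<mu> p *\<^sub>R p) + \<epsilon> *\<^sub>R c)"
    proof -
      have "(\<Sum>p\<in>P. u p *\<^sub>R p) = (\<Sum>p\<in>P. (1 / (1 + \<epsilon>)) *\<^sub>R (\<mu> p *\<^sub>R p + \<epsilon> *\<^sub>R ((1 / real (card P)) *\<^sub>R p)))"
        by (rule sum.cong[OF refl]) (simp add: u_def scaleR_add_left scaleR_add_right add_divide_distrib)
      also have "\<dots> = (1 / (1 + \<epsilon>)) *\<^sub>R ((\<Sum>p\<in>P. \<mu> p *\<^sub>R p) + \<epsilon> *\<^sub>R c)"
        unfolding c_def scaleR_right.sum[symmetric] sum.distrib ..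
      finally show ?thesis .
    qed
    also have "\<dots> = (1 / (1 + \<epsilon>)) *\<^sub>R ((1 + \<epsilon>) *\<^sub>R x)"
      using mu(3) unfolding y_def by (simp add: algebra_simps)
    also have "\<dots> = x" using eps by simp
    finally show ?thesis .
  qed
  ultimately show ?thesis by blast
qed

lemma interior_hull_pos_weights_idx:
  fixes f :: "'i \<Rightarrow> 'a::euclidean_space"
  assumes fin: "finite N" and x: "x \<in> interior (convex hull (f ` N))"
  shows "\<exists>w. (\<forall>j\<in>N. 0 < w j) \<and> sum w N = 1 \<and> (\<Sum>j\<in>N. w j *\<^sub>R f j) = x"
proof -
  obtain u where u: "\<forall>p\<in>f ` N. 0 < u p" "sum u (f ` N) = 1" "(\<Sum>p\<in>f ` N. u p *\<^sub>R p) = x"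
    using interior_hull_pos_weights[OF finite_imageI[OF fin] x] by blast
  define c where "c y = card {k \<in> N. f k = y}" for y
  have cpos: "real (c y) > 0" if "y \<in> f ` N" for y
    unfolding c_def using that fin by (auto simp: card_gt_0_iff)
  define w where "w j = u (f j) / real (c (f j))" for j
  have "\<forall>j\<in>N. 0 < w j" unfolding w_def using u(1) cpos by auto
  moreover have "sum w N = 1"
  proof -
    have "sum w N = (\<Sum>y\<in>f ` N. sum w {k \<in> N. f k = y})"
      by (rule sum.image_gen[OF fin])
    also have "\<dots> = (\<Sum>y\<in>f ` N. u y)"
    proof (rule sum.cong[OF refl])
      fix y assume y: "y \<in> f ` N"
      have "sum w {k \<in> N. f k = y} = (\<Sum>k\<in>{k \<in> N. f k = y}. u y / real (c y))"
        unfolding w_def by (rule sum.cong) auto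
      also have "\<dots> = u y" using cpos[OF y] unfolding c_def by simp
      finally show "sum w {k \<in> N. f k = y} = u y" .
    qed
    finally show ?thesis using u(2) by simp
  qed
  moreover have "(\<Sum>j\<in>N. w j *\<^sub>R f j) = x"
  proof -
    have "(\<Sum>j\<in>N. w j *\<^sub>R f j) = (\<Sum>y\<in>f ` N. (\<Sum>j\<in>{k \<in> N. f k = y}. w j *\<^sub>R f j))"
      by (rule sum.image_gen[OF fin])
    also have "\<dots> = (\<Sum>y\<in>f ` N. u y *\<^sub>R y)"
    proof (rule sum.cong[OF refl])
      fix y assume y: "y \<in> f ` N"
      have "(\<Sum>j\<in>{k \<in> N. f k = y}. w j *\<^sub>R f j) = (\<Sum>k\<in>{k \<in> N. f k = y}. (u y / real (c y)) *\<^sub>R y)"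
        unfolding w_def by (rule sum.cong) auto
      also have "\<dots> = (real (c y) * (u y / real (c y))) *\<^sub>R y"
        unfolding c_def by (simp add: sum_constant_scaleR)
      also have "\<dots> = u y *\<^sub>R y" using cpos[OF y] by simp
      finally show "(\<Sum>j\<in>{k \<in> N. f k = y}. w j *\<^sub>R f j) = u y *\<^sub>R y" .
    qed
    finally show ?thesis using u(3) by simp
  qed
  ultimately show ?thesis by blast
qed

theorem lemma5p6:
  fixes V :: "'v set" and E :: "'v \<Rightarrow> 'v \<Rightarrow> bool"
    and q :: "'v \<Rightarrow> 'a::euclidean_space" and X :: "'v set"
  assumes "simple_graph V E"
    and "vertex_connected (DIM('a) + 1) V E"
    and "card V \<ge> DIM('a) + 1"
    and "convex_containment V E q X"
  shows "\<exists>\<Omega>. nonsym_equilibrium_stress V E q \<Omega> \<and>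
           (\<forall>i\<in>V - X. \<forall>j. E i j \<longrightarrow> \<Omega> i j > 0)"
proof -
  have finV: "finite V" and inV: "\<And>u w. E u w \<Longrightarrow> u \<in> V \<and> w \<in> V"
    and irr: "\<And>u. \<not> E u u"
    using assms(1) unfolding simple_graph_def by auto
  have cc: "\<forall>i\<in>V - X. q i \<in> interior (convex hull (q ` neighbors V E i))"
    using assms(4) unfolding convex_containment_def by auto
  have "\<forall>i\<in>V - X. \<exists>w. (\<forall>j\<in>neighbors V E i. 0 < w j) \<and> sum w (neighbors V E i) = 1
      \<and> (\<Sum>j\<in>neighbors V E i. w j *\<^sub>R q j) = q i"
  proof
    fix i assume "i \<in> V - X"
    moreover have "finite (neighbors V E i)" using finV unfolding neighbors_def by simp
    ultimately show "\<exists>w. (\<forall>j\<in>neighbors V E i. 0 < w j) \<and> sum w (neighbors V E i) = 1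
      \<and> (\<Sum>j\<in>neighbors V E i. w j *\<^sub>R q j) = q i"
      using cc interior_hull_pos_weights_idx[of "neighbors V E i" "q i" q] by blast
  qed
  then obtain W where W: "\<And>i. i \<in> V - X \<Longrightarrow> (\<forall>j\<in>neighbors V E i. 0 < W i j)
      \<and> sum (W i) (neighbors V E i) = 1 \<and> (\<Sum>j\<in>neighbors V E i. W i j *\<^sub>R q j) = q i"
    by metis
  define \<Omega> where "\<Omega> i w = (if i \<in> V - X then (if w = i then -1 else 0) + (if E i w then W i w else 0) else 0)"
    for i w
  have rs: "(\<Sum>w\<in>V. \<Omega> u w) = 0" if u: "u \<in> V" for u
  proof (cases "u \<in> V - X")
    case True
    have "(\<Sum>w\<in>V. \<Omega> u w) = (\<Sum>w\<in>V. (if w = u then -1 else 0)) + (\<Sum>w\<in>V. if E u w then W u w else 0)"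
      unfolding \<Omega>_def using True by (simp add: sum.distrib)
    also have "\<dots> = -1 + sum (W u) (neighbors V E u)"
      using u finV unfolding neighbors_def by (simp add: sum.inter_filter sum.delta')
    also have "\<dots> = 0" using W[OF True] by simp
    finally show ?thesis .
  qed (auto simp: \<Omega>_def)
  have vs: "(\<Sum>w\<in>V. \<Omega> u w *\<^sub>R q w) = 0" if u: "u \<in> V" for u
  proof (cases "u \<in> V - X")
    case True
    have "(\<Sum>w\<in>V. \<Omega> u w *\<^sub>R q w) = (\<Sum>w\<in>V. (if w = u then - q u else 0)) + (\<Sum>w\<in>V. if E u w then W u w *\<^sub>R q w else 0)"
      unfolding sum.distrib[symmetric]
    proof (rule sum.cong[OF refl])
      fix w assume "w \<in> V"
      show "\<Omega> u w *\<^sub>R q w = (if w = u then - q u else 0) + (if E u w then W u w *\<^sub>R q w else 0)"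
        unfolding \<Omega>_def using True irr by (cases "w = u"; cases "E u w") auto
    qed
    also have "\<dots> = - q u + (\<Sum>j\<in>neighbors V E u. W u j *\<^sub>R q j)"
      using u finV unfolding neighbors_def by (simp add: sum.inter_filter sum.delta')
    also have "\<dots> = 0" using W[OF True] by simp
    finally show ?thesis .
  qed (auto simp: \<Omega>_def)
  have "nonsym_equilibrium_stress V E q \<Omega>"
    unfolding nonsym_equilibrium_stress_def using rs vs by (auto simp: \<Omega>_def)
  moreover have "\<forall>i\<in>V - X. \<forall>j. E i j \<longrightarrow> \<Omega> i j > 0"
  proof (intro ballI allI impI)
    fix i j assume i: "i \<in> V - X" and e: "E i j"
    then have "j \<in> neighbors V E i" "j \<noteq> i" using inV irr unfolding neighbors_def by auto
    then show "\<Omega> i j > 0" using W[OF i] i e unfolding \<Omega>_def by auto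
  qed
  ultimately show ?thesis by blast
qed

end
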